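(* Let $\mathcal{X}$ be a finite set of locations with metric $d$, let $\pi$ be a prior distribution on $\mathcal{X}$ with $\pi(x)>0$ for all $x\in\mathcal{X}$, let $\{\Phi_k\}$ be a partition of $\mathcal{X}$ into nonempty disjoint sets, let $\epsilon_k\ge 0$ for each $k$, and let $E_m\ge 0$. Let $f(\cdot\mid\cdot)$ be an obfuscation mechanism that satisfies $\epsilon_k$-differential privacy on each $\Phi_k$, i.e. $f(x'\mid x)\le e^{\epsilon_k} f(x'\mid y)$ for all $x,y\in\Phi_k$ and all $x'\in\mathcal{X}$. Suppose that for every $k$, $$E'(\Phi_k)\ \ge\ e^{\epsilon_k}E_m .$$ Then for every pseudo-location $x'\in\mathcal{X}$ with $\Pr(x')>0$, the conditional expected inference error of the optimal inference attack satisfies $ExpEr(x')\ge E_m$.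
   Context: An obfuscation mechanism is a family of probability distributions $f(\cdot\mid x)$ on $\mathcal{X}$, one for each true location $x\in\mathcal{X}$; $f(x'\mid x)$ is the probability of reporting pseudo-location $x'$ when the true location is $x$. The adversary knows $\pi$ and $f$. Define $\Pr(x')=\sum_{x\in\mathcal{X}}\pi(x)f(x'\mid x)$ and, when $\Pr(x')>0$, the posterior $\Pr(x\mid x')=\pi(x)f(x'\mid x)/\Pr(x')$. The conditional expected inference error (of the optimal inference attack) is $$ExpEr(x')=\min_{\hat{x}\in\mathcal{X}}\sum_{x\in\mathcal{X}}\Pr(x\mid x')\,d(\hat{x},x).$$ For a nonempty $\Phi\subseteq\mathcal{X}$, define $$E'(\Phi)=\min_{\hat{x}\in\mathcal{X}}\sum_{x\in\Phi}\frac{\pi(x)}{\sum_{y\in\Phi}\pi(y)}\,d(\hat{x},x)$$ (note the minimum ranges over all of $\mathcal{X}$, not just $\Phi$). *)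

theory Defs
  imports "HOL-Analysis.Analysis"
begin

definition is_metric_on :: "'a set \<Rightarrow> ('a \<Rightarrow> 'a \<Rightarrow> real) \<Rightarrow> bool" where
  "is_metric_on X d \<longleftrightarrow>
     (\<forall>x\<in>X. \<forall>y\<in>X. d x y \<ge> 0) \<and>
     (\<forall>x\<in>X. \<forall>y\<in>X. d x y = 0 \<longleftrightarrow> x = y) \<and>
     (\<forall>x\<in>X. \<forall>y\<in>X. d x y = d y x) \<and>
     (\<forall>x\<in>X. \<forall>y\<in>X. \<forall>z\<in>X. d x z \<le> d x y + d y z)"

definition is_distribution_on :: "'a set \<Rightarrow> ('a \<Rightarrow> real) \<Rightarrow> bool" where
  "is_distribution_on X p \<longleftrightarrow> (\<forall>x\<in>X. p x \<ge> 0) \<and> (\<Sum>x\<in>X. p x) = 1"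

text \<open>Obfuscation mechanism: f x' x is the probability of reporting x' given true location x.\<close>
definition is_mechanism :: "'a set \<Rightarrow> ('a \<Rightarrow> 'a \<Rightarrow> real) \<Rightarrow> bool" where
  "is_mechanism X f \<longleftrightarrow> (\<forall>x\<in>X. is_distribution_on X (\<lambda>x'. f x' x))"

definition is_partition_of :: "'a set \<Rightarrow> 'a set set \<Rightarrow> bool" where
  "is_partition_of X P \<longleftrightarrow> \<Union>P = X \<and> {} \<notin> P \<and>
     (\<forall>A\<in>P. \<forall>B\<in>P. A \<noteq> B \<longrightarrow> A \<inter> B = {})"

definition Pr_out :: "'a set \<Rightarrow> ('a \<Rightarrow> real) \<Rightarrow> ('a \<Rightarrow> 'a \<Rightarrow> real) \<Rightarrow> 'a \<Rightarrow> real" where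
  "Pr_out X \<pi> f x' = (\<Sum>x\<in>X. \<pi> x * f x' x)"

definition posterior :: "'a set \<Rightarrow> ('a \<Rightarrow> real) \<Rightarrow> ('a \<Rightarrow> 'a \<Rightarrow> real) \<Rightarrow> 'a \<Rightarrow> 'a \<Rightarrow> real" where
  "posterior X \<pi> f x x' = \<pi> x * f x' x / Pr_out X \<pi> f x'"

definition ExpEr :: "'a set \<Rightarrow> ('a \<Rightarrow> 'a \<Rightarrow> real) \<Rightarrow> ('a \<Rightarrow> real) \<Rightarrow> ('a \<Rightarrow> 'a \<Rightarrow> real) \<Rightarrow> 'a \<Rightarrow> real" where
  "ExpEr X d \<pi> f x' = Min ((\<lambda>xh. \<Sum>x\<in>X. posterior X \<pi> f x x' * d xh x) ` X)"

definition E' :: "'a set \<Rightarrow> ('a \<Rightarrow> 'a \<Rightarrow> real) \<Rightarrow> ('a \<Rightarrow> real) \<Rightarrow> 'a set \<Rightarrow> real" where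
  "E' X d \<pi> \<Phi> = Min ((\<lambda>xh. \<Sum>x\<in>\<Phi>. \<pi> x / (\<Sum>y\<in>\<Phi>. \<pi> y) * d xh x) ` X)"

end

theory Submission
  imports Defs
begin

lemma block_bound:
  fixes X \<Phi> :: "'a set" and d :: "'a \<Rightarrow> 'a \<Rightarrow> real" and \<pi> :: "'a \<Rightarrow> real"
    and f :: "'a \<Rightarrow> 'a \<Rightarrow> real" and e Em :: real
  assumes fin: "finite X" and sub: "\<Phi> \<subseteq> X" and ne: "\<Phi> \<noteq> {}"
    and dpos: "\<forall>x\<in>X. d xh x \<ge> 0" and xh: "xh \<in> X"
    and pipos: "\<forall>x\<in>X. \<pi> x > 0"
    and fpos: "\<forall>x\<in>X. f x' x \<ge> 0"
    and Em: "Em \<ge> 0"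
    and dp: "\<forall>x\<in>\<Phi>. \<forall>y\<in>\<Phi>. f x' x \<le> e * f x' y"
    and E: "E' X d \<pi> \<Phi> \<ge> e * Em"
  shows "(\<Sum>x\<in>\<Phi>. \<pi> x * f x' x * d xh x) \<ge> Em * (\<Sum>x\<in>\<Phi>. \<pi> x * f x' x)"
proof -
  have finP: "finite \<Phi>" using fin sub finite_subset by blast
  define m where "m = Min ((\<lambda>y. f x' y) ` \<Phi>)"
  have "m \<in> (\<lambda>y. f x' y) ` \<Phi>" unfolding m_def using finP ne by simp
  then obtain y0 where y0: "y0 \<in> \<Phi>" "f x' y0 = m" by auto
  have mle: "\<forall>x\<in>\<Phi>. m \<le> f x' x" unfolding m_def using finP by simp
  have m0: "m \<ge> 0" using y0 fpos sub by auto
  have up: "\<forall>x\<in>\<Phi>. f x' x \<le> e * m" using dp y0 by metis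
  define S where "S = (\<Sum>y\<in>\<Phi>. \<pi> y)"
  have Spos: "S > 0" unfolding S_def using finP ne pipos sub
    by (meson subsetD sum_pos)
  have "E' X d \<pi> \<Phi> \<le> (\<Sum>x\<in>\<Phi>. \<pi> x / S * d xh x)"
    unfolding E'_def S_def using fin xh by (intro Min_le) auto
  also have "\<dots> = (\<Sum>x\<in>\<Phi>. \<pi> x * d xh x) / S"
    by (simp add: sum_divide_distrib)
  finally have "e * Em \<le> (\<Sum>x\<in>\<Phi>. \<pi> x * d xh x) / S" using E by linarith
  hence A: "S * (e * Em) \<le> (\<Sum>x\<in>\<Phi>. \<pi> x * d xh x)" using Spos
    by (simp add: pos_le_divide_eq mult.commute)
  have "(\<Sum>x\<in>\<Phi>. \<pi> x * f x' x * d xh x) \<ge> (\<Sum>x\<in>\<Phi>. m * (\<pi> x * d xh x))"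
  proof (rule sum_mono)
    fix x assume x: "x \<in> \<Phi>"
    have "0 \<le> \<pi> x * d xh x" using x sub pipos dpos
      by (meson less_imp_le mult_nonneg_nonneg subsetD)
    thus "m * (\<pi> x * d xh x) \<le> \<pi> x * f x' x * d xh x"
      using mle x by (metis mult.assoc mult.commute mult_right_mono)
  qed
  also have "(\<Sum>x\<in>\<Phi>. m * (\<pi> x * d xh x)) = m * (\<Sum>x\<in>\<Phi>. \<pi> x * d xh x)"
    by (simp add: sum_distrib_left)
  finally have B: "m * (S * (e * Em)) \<le> (\<Sum>x\<in>\<Phi>. \<pi> x * f x' x * d xh x)"
    using A m0 by (meson mult_left_mono order_trans)
  have "Em * (\<Sum>x\<in>\<Phi>. \<pi> x * f x' x) \<le> Em * (\<Sum>x\<in>\<Phi>. \<pi> x * (e * m))"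
  proof (rule mult_left_mono[OF sum_mono Em])
    fix x assume x: "x \<in> \<Phi>"
    show "\<pi> x * f x' x \<le> \<pi> x * (e * m)" using up x pipos sub
      by (meson less_imp_le mult_left_mono subsetD)
  qed
  also have "\<dots> = Em * (S * (e * m))" unfolding S_def
    by (simp add: sum_distrib_right)
  also have "\<dots> = m * (S * (e * Em))" by (simp add: algebra_simps)
  finally show ?thesis using B by linarith
qed

theorem theorem4:
  fixes X :: "'a set" and d :: "'a \<Rightarrow> 'a \<Rightarrow> real" and \<pi> :: "'a \<Rightarrow> real"
    and P :: "'a set set" and \<epsilon> :: "'a set \<Rightarrow> real" and Em :: real
    and f :: "'a \<Rightarrow> 'a \<Rightarrow> real"
  assumes "finite X" "X \<noteq> {}"
    and "is_metric_on X d"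
    and "is_distribution_on X \<pi>" "\<forall>x\<in>X. \<pi> x > 0"
    and "is_partition_of X P"
    and "\<forall>\<Phi>\<in>P. \<epsilon> \<Phi> \<ge> 0"
    and "Em \<ge> 0"
    and "is_mechanism X f"
    and "\<forall>\<Phi>\<in>P. \<forall>x\<in>\<Phi>. \<forall>y\<in>\<Phi>. \<forall>x'\<in>X. f x' x \<le> exp (\<epsilon> \<Phi>) * f x' y"
    and "\<forall>\<Phi>\<in>P. E' X d \<pi> \<Phi> \<ge> exp (\<epsilon> \<Phi>) * Em"
    and "x' \<in> X" "Pr_out X \<pi> f x' > 0"
  shows "ExpEr X d \<pi> f x' \<ge> Em"
proof -
  note a = assms
  have dpos: "\<forall>xh\<in>X. \<forall>x\<in>X. d xh x \<ge> 0" using a(3) unfolding is_metric_on_def by (rule conjunct1)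
  have fpos: "\<forall>x\<in>X. f x' x \<ge> 0" 
  proof
    fix x assume "x \<in> X"
    hence "is_distribution_on X (\<lambda>x'. f x' x)" using a(9) unfolding is_mechanism_def by blast
    thus "f x' x \<ge> 0" using a(12) unfolding is_distribution_on_def by blast
  qed
  have pd: "\<Union>P = X \<and> {} \<notin> P \<and> (\<forall>A\<in>P. \<forall>B\<in>P. A \<noteq> B \<longrightarrow> A \<inter> B = {})"
    using a(6) unfolding is_partition_of_def .
  note UP = conjunct1[OF pd]
  note eP = conjunct1[OF conjunct2[OF pd]]
  note dj = conjunct2[OF conjunct2[OF pd]]
  have finP: "finite P" using finite_UnionD[of P] a(1) UP by simp
  have finA: "\<forall>A\<in>P. finite A" proof
    fix A assume "A \<in> P" hence "A \<subseteq> X" using UP by blast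
    thus "finite A" using a(1) finite_subset by blast
  qed
  have pw: "pairwise disjnt P" using dj unfolding pairwise_def disjnt_def by blast
  have split: "sum g X = (\<Sum>A\<in>P. sum g A)" for g :: "'a \<Rightarrow> real"
  proof -
    have "sum g (\<Union>P) = (sum \<circ> sum) g P" by (rule sum.Union_disjoint[OF finA dj])
    thus ?thesis using UP by simp
  qed
  define Pr where "Pr = Pr_out X \<pi> f x'"
  have key: "(\<Sum>x\<in>X. \<pi> x * f x' x * d xh x) \<ge> Em * Pr" if xh: "xh \<in> X" for xh
  proof -
    have "(\<Sum>x\<in>X. \<pi> x * f x' x * d xh x) = (\<Sum>A\<in>P. \<Sum>x\<in>A. \<pi> x * f x' x * d xh x)"
      by (rule split)
    also have "\<dots> \<ge> (\<Sum>A\<in>P. Em * (\<Sum>x\<in>A. \<pi> x * f x' x))"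
    proof (rule sum_mono)
      fix A assume A: "A \<in> P"
      show "Em * (\<Sum>x\<in>A. \<pi> x * f x' x) \<le> (\<Sum>x\<in>A. \<pi> x * f x' x * d xh x)"
      proof (rule block_bound[where X=X and e="exp (\<epsilon> A)"])
        show "finite X" by (rule a(1))
        show "A \<subseteq> X" using A UP by blast
        show "A \<noteq> {}" using A eP by blast
        show "\<forall>x\<in>X. 0 \<le> d xh x" using dpos xh by blast
        show "xh \<in> X" by (rule xh)
        show "\<forall>x\<in>X. 0 < \<pi> x" by (rule a(5))
        show "\<forall>x\<in>X. 0 \<le> f x' x" by (rule fpos)
        show "0 \<le> Em" by (rule a(8))
        show "\<forall>x\<in>A. \<forall>y\<in>A. f x' x \<le> exp (\<epsilon> A) * f x' y" using a(10) A a(12) by blast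
        show "exp (\<epsilon> A) * Em \<le> E' X d \<pi> A" using a(11) A by blast
      qed
    qed
    also have "(\<Sum>A\<in>P. Em * (\<Sum>x\<in>A. \<pi> x * f x' x)) = Em * (\<Sum>x\<in>X. \<pi> x * f x' x)"
      by (simp only: split[symmetric] sum_distrib_left[symmetric])
    finally show ?thesis unfolding Pr_def Pr_out_def by simp
  qed
  have Prpos: "Pr > 0" using a(13) Pr_def by simp
  show ?thesis unfolding ExpEr_def
  proof (rule Min.boundedI)
    show "finite ((\<lambda>xh. \<Sum>x\<in>X. posterior X \<pi> f x x' * d xh x) ` X)" using a(1) by simp
    show "(\<lambda>xh. \<Sum>x\<in>X. posterior X \<pi> f x x' * d xh x) ` X \<noteq> {}" using a(2) by simp
    show "Em \<le> v" if vin: "v \<in> (\<lambda>xh. \<Sum>x\<in>X. posterior X \<pi> f x x' * d xh x) ` X" for v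
    proof -
      obtain xh where xh: "xh \<in> X" and v: "v = (\<Sum>x\<in>X. posterior X \<pi> f x x' * d xh x)" using vin by blast
      have "v = (\<Sum>x\<in>X. \<pi> x * f x' x * d xh x) / Pr"
        unfolding v posterior_def Pr_def by (simp add: sum_divide_distrib)
      thus "Em \<le> v" using key[OF xh] Prpos by (simp add: pos_le_divide_eq)
    qed
  qed
qed

end
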